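(* Let $n\geq 2$, $N=\binom{n}{2}$ and $q\geq N$. For $j=1,\dots,q$ let $L^j$ be an $n\times 2$ matrix whose $2n$ entries are independent indeterminates (distinct matrices using disjoint sets of indeterminates). For $i=1,\dots,N$ let $p^i(L^j)$ denote the $i$-th $2\times 2$ minor of $L^j$ (the minors indexed by the $N$ pairs of rows in a fixed order). Form the $N\times q$ matrix with entries $p^i(L^j)$. Then the determinant of any $N\times N$ submatrix of this matrix (obtained by choosing $N$ columns) is an irreducible polynomial.
   Context: Polynomials are over $\mathbb{R}$ in all the indeterminates appearing. *)

theory Defs
  imports "HOL-Library.Poly_Mapping" "HOL-Library.Product_Lexorder"
    "HOL-Computational_Algebra.Factorial_Ring" "Jordan_Normal_Form.Determinant"
begin

text \<open>Multivariate real polynomials in indeterminates indexed by triples (j, r, c):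
  the indeterminate X j r c is the (r,c) entry of the n x 2 matrix L^j
  (all indices 0-based).\<close>

type_synonym var = "nat \<times> nat \<times> nat"
type_synonym mpoly = "(var \<Rightarrow>\<^sub>0 nat) \<Rightarrow>\<^sub>0 real"

definition Var :: "nat \<Rightarrow> nat \<Rightarrow> nat \<Rightarrow> mpoly" where
  "Var j r c = Poly_Mapping.single (Poly_Mapping.single (j, r, c) 1) 1"

definition row_pairs :: "nat \<Rightarrow> (nat \<times> nat) list" where
  "row_pairs n = concat (map (\<lambda>a. map (\<lambda>b. (a, b)) [Suc a..<n]) [0..<n])"

definition pl_minor :: "nat \<Rightarrow> nat \<Rightarrow> nat \<Rightarrow> mpoly" where
  "pl_minor n i j = (let (a, b) = row_pairs n ! i in
      Var j a 0 * Var j b 1 - Var j a 1 * Var j b 0)"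

definition minor_submatrix :: "nat \<Rightarrow> (nat \<Rightarrow> nat) \<Rightarrow> mpoly mat" where
  "minor_submatrix n colsel = mat (n choose 2) (n choose 2) (\<lambda>(i, k). pl_minor n i (colsel k))"

end

theory Submission
  imports Defs
begin

abbreviation lk where "lk \<equiv> Poly_Mapping.lookup"
abbreviation ky where "ky \<equiv> Poly_Mapping.keys"

definition Cst :: "real \<Rightarrow> mpoly" where "Cst c = Poly_Mapping.single 0 c"
definition X :: "var \<Rightarrow> mpoly" where "X v = Poly_Mapping.single (Poly_Mapping.single v 1) 1"
definition vars :: "mpoly \<Rightarrow> var set" where "vars p = (\<Union>m\<in>ky p. ky m)"

lemma Var_X: "Var j r c = X (j,r,c)" by (simp add: Var_def X_def)

lemma Cst_add: "Cst (a + b) = Cst a + Cst b" by (simp add: Cst_def single_add)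
lemma Cst_mult: "Cst (a * b) = Cst a * Cst b" by (simp add: Cst_def mult_single)
lemma Cst_0[simp]: "Cst 0 = 0" by (simp add: Cst_def)
lemma Cst_1[simp]: "Cst 1 = 1" by (simp add: Cst_def)

lemma poly_expand: "p = (\<Sum>m\<in>ky p. Poly_Mapping.single m (lk p m))"
proof (rule poly_mapping_eqI)
  fix k
  show "lk p k = lk (\<Sum>m\<in>ky p. Poly_Mapping.single m (lk p m)) k"
    by (simp add: lookup_sum lookup_single when_def in_keys_iff)
qed

lemma mult_expand: "(p::mpoly) * q = (\<Sum>a\<in>ky p. \<Sum>b\<in>ky q. Poly_Mapping.single (a+b) (lk p a * lk q b))"
proof -
  have "p * q = (\<Sum>m\<in>ky p. Poly_Mapping.single m (lk p m)) * (\<Sum>m\<in>ky q. Poly_Mapping.single m (lk q m))"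
    using poly_expand[of p] poly_expand[of q] by simp
  also have "\<dots> = (\<Sum>a\<in>ky p. \<Sum>b\<in>ky q. Poly_Mapping.single (a+b) (lk p a * lk q b))"
    by (simp add: sum_distrib_left sum_distrib_right mult_single) (rule sum.swap)
  finally show ?thesis .
qed

lemma lookup_mult_sum: "lk ((p::mpoly) * q) k = (\<Sum>a\<in>ky p. \<Sum>b\<in>ky q. if a + b = k then lk p a * lk q b else 0)"
  by (subst mult_expand) (simp add: lookup_sum lookup_single when_def)

definition restr :: "((var \<Rightarrow>\<^sub>0 nat) \<Rightarrow> bool) \<Rightarrow> mpoly \<Rightarrow> mpoly" where
  "restr P p = Abs_poly_mapping (\<lambda>m. if P m then lk p m else 0)"

lemma lookup_restr: "lk (restr P p) m = (if P m then lk p m else 0)"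
proof -
  have "{m. (if P m then lk p m else 0) \<noteq> 0} \<subseteq> ky p" by (auto simp: in_keys_iff split: if_splits)
  hence "finite {m. (if P m then lk p m else 0) \<noteq> 0}" by (rule finite_subset) simp
  thus ?thesis unfolding restr_def by simp
qed

lemma restr_split: "p = restr P p + restr (\<lambda>m. \<not> P m) p"
  by (rule poly_mapping_eqI) (simp add: lookup_add lookup_restr)

lemma keys_restr: "ky (restr P p) = {m \<in> ky p. P m}"
  by (auto simp: in_keys_iff lookup_restr split: if_splits)

lemma keys_mult_deg:
  assumes "\<And>a b. a \<in> ky p \<Longrightarrow> b \<in> ky q \<Longrightarrow> lk (a + b) v \<noteq> d"
  shows "\<forall>m\<in>ky ((p::mpoly) * q). lk m v \<noteq> d"
  using keys_mult[of p q] assms by blast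

lemma mult_deg_lb:
  fixes p q :: mpoly
  assumes "a \<in> ky p" "b \<in> ky q"
  shows "\<exists>m\<in>ky (p*q). lk a v + lk b v \<le> lk m v"
proof -
  define d1 where "d1 = Max ((\<lambda>m. lk m v) ` ky p)"
  define d2 where "d2 = Max ((\<lambda>m. lk m v) ` ky q)"
  have le1: "\<And>m. m \<in> ky p \<Longrightarrow> lk m v \<le> d1" unfolding d1_def by simp
  have le2: "\<And>m. m \<in> ky q \<Longrightarrow> lk m v \<le> d2" unfolding d2_def by simp
  have "d1 \<in> (\<lambda>m. lk m v) ` ky p" unfolding d1_def using assms by (intro Max_in) auto
  then obtain a' where a': "a' \<in> ky p" "lk a' v = d1" by auto
  have "d2 \<in> (\<lambda>m. lk m v) ` ky q" unfolding d2_def using assms by (intro Max_in) auto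
  then obtain b' where b': "b' \<in> ky q" "lk b' v = d2" by auto
  define p1 where "p1 = restr (\<lambda>m. lk m v = d1) p"
  define p0 where "p0 = restr (\<lambda>m. \<not> lk m v = d1) p"
  define q1 where "q1 = restr (\<lambda>m. lk m v = d2) q"
  define q0 where "q0 = restr (\<lambda>m. \<not> lk m v = d2) q"
  have pp: "p = p1 + p0" unfolding p1_def p0_def by (rule restr_split)
  have qq: "q = q1 + q0" unfolding q1_def q0_def by (rule restr_split)
  have "a' \<in> ky p1" using a' by (simp add: p1_def keys_restr)
  hence "p1 \<noteq> 0" by auto
  have "b' \<in> ky q1" using b' by (simp add: q1_def keys_restr)
  hence "q1 \<noteq> 0" by auto
  hence "p1 * q1 \<noteq> 0" using \<open>p1 \<noteq> 0\<close> by simp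
  then obtain m where m: "m \<in> ky (p1 * q1)" by (metis keys_eq_empty ex_in_conv)
  have mdeg: "lk m v = d1 + d2"
    using keys_mult[of p1 q1] m by (auto simp: p1_def q1_def keys_restr lookup_add)
  have "p * q = p1 * q1 + (p1 * q0 + p0 * q)" using pp qq by (simp add: algebra_simps)
  moreover have "m \<notin> ky (p1 * q0)"
  proof -
    have "\<forall>m\<in>ky (p1 * q0). lk m v \<noteq> d1 + d2"
      by (rule keys_mult_deg) (auto simp: p1_def q0_def keys_restr lookup_add dest!: le2)
    thus ?thesis using mdeg by auto
  qed
  moreover have "m \<notin> ky (p0 * q)"
  proof -
    have "\<forall>m\<in>ky (p0 * q). lk m v \<noteq> d1 + d2"
      by (rule keys_mult_deg) (auto simp: p0_def keys_restr lookup_add dest!: le1 le2)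
    thus ?thesis using mdeg by auto
  qed
  ultimately have "lk (p*q) m = lk (p1*q1) m" by (simp add: lookup_add in_keys_iff)
  hence "m \<in> ky (p*q)" using m by (simp add: in_keys_iff)
  moreover have "lk a v + lk b v \<le> lk m v" using le1[OF assms(1)] le2[OF assms(2)] mdeg by simp
  ultimately show ?thesis by blast
qed

definition mono :: "(var \<Rightarrow> mpoly) \<Rightarrow> (var \<Rightarrow>\<^sub>0 nat) \<Rightarrow> mpoly" where
  "mono \<phi> m = (\<Prod>v\<in>ky m. \<phi> v ^ lk m v)"

lemma mono_superset: "finite S \<Longrightarrow> ky m \<subseteq> S \<Longrightarrow> mono \<phi> m = (\<Prod>v\<in>S. \<phi> v ^ lk m v)"
  unfolding mono_def by (rule prod.mono_neutral_left) (auto simp: in_keys_iff)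

lemma mono_add: "mono \<phi> (a + b) = mono \<phi> a * mono \<phi> b"
proof -
  let ?S = "ky a \<union> ky b"
  have "mono \<phi> (a + b) = (\<Prod>v\<in>?S. \<phi> v ^ lk (a+b) v)"
    by (rule mono_superset) (use keys_add[of a b] in auto)
  also have "\<dots> = (\<Prod>v\<in>?S. \<phi> v ^ lk a v) * (\<Prod>v\<in>?S. \<phi> v ^ lk b v)"
    by (simp add: lookup_add power_add prod.distrib)
  also have "\<dots> = mono \<phi> a * mono \<phi> b"
    by (simp add: mono_superset[symmetric])
  finally show ?thesis .
qed

lemma mono_zero[simp]: "mono \<phi> 0 = 1" by (simp add: mono_def)
lemma mono_single1: "mono \<phi> (Poly_Mapping.single v 1) = \<phi> v" by (simp add: mono_def)

definition ev :: "(var \<Rightarrow> mpoly) \<Rightarrow> mpoly \<Rightarrow> mpoly" where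
  "ev \<phi> p = (\<Sum>m\<in>ky p. Cst (lk p m) * mono \<phi> m)"

lemma ev_superset: "finite S \<Longrightarrow> ky p \<subseteq> S \<Longrightarrow> ev \<phi> p = (\<Sum>m\<in>S. Cst (lk p m) * mono \<phi> m)"
  unfolding ev_def by (rule sum.mono_neutral_left) (auto simp: in_keys_iff)

lemma ev_add: "ev \<phi> (p + q) = ev \<phi> p + ev \<phi> q"
proof -
  let ?S = "ky p \<union> ky q"
  have "ev \<phi> (p + q) = (\<Sum>m\<in>?S. Cst (lk (p+q) m) * mono \<phi> m)"
    by (rule ev_superset) (use keys_add[of p q] in auto)
  also have "\<dots> = (\<Sum>m\<in>?S. Cst (lk p m) * mono \<phi> m) + (\<Sum>m\<in>?S. Cst (lk q m) * mono \<phi> m)"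
    by (simp add: lookup_add Cst_add algebra_simps sum.distrib)
  also have "\<dots> = ev \<phi> p + ev \<phi> q"
    by (simp add: ev_superset[symmetric])
  finally show ?thesis .
qed

lemma ev_zero[simp]: "ev \<phi> 0 = 0" by (simp add: ev_def)

lemma ev_single: "ev \<phi> (Poly_Mapping.single m c) = Cst c * mono \<phi> m"
  by (cases "c = 0") (simp_all add: ev_def)

lemma ev_sum: "ev \<phi> (sum f S) = (\<Sum>x\<in>S. ev \<phi> (f x))"
  by (induction S rule: infinite_finite_induct) (simp_all add: ev_add)

lemma ev_mult: "ev \<phi> (p * q) = ev \<phi> p * ev \<phi> q"
proof -
  have *: "ev \<phi> (Poly_Mapping.single (a+b) (x*y)) = ev \<phi> (Poly_Mapping.single a x) * ev \<phi> (Poly_Mapping.single b y)" for a b x y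
    by (simp add: ev_single mono_add Cst_mult mult_ac)
  have "ev \<phi> (p * q) = (\<Sum>a\<in>ky p. \<Sum>b\<in>ky q. ev \<phi> (Poly_Mapping.single a (lk p a)) * ev \<phi> (Poly_Mapping.single b (lk q b)))"
    by (subst mult_expand) (simp only: ev_sum *)
  also have "\<dots> = ev \<phi> (\<Sum>a\<in>ky p. Poly_Mapping.single a (lk p a)) * ev \<phi> (\<Sum>b\<in>ky q. Poly_Mapping.single b (lk q b))"
    by (simp add: ev_sum sum_distrib_left sum_distrib_right) (rule sum.swap)
  also have "\<dots> = ev \<phi> p * ev \<phi> q" using poly_expand[of p] poly_expand[of q] by simp
  finally show ?thesis .
qed

lemma ev_one[simp]: "ev \<phi> 1 = 1"
proof -
  have "(1::mpoly) = Poly_Mapping.single 0 1" by simp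
  hence "ev \<phi> 1 = Cst 1 * mono \<phi> 0" by (metis ev_single)
  thus ?thesis by simp
qed

lemma ev_X[simp]: "ev \<phi> (X v) = \<phi> v" unfolding X_def ev_single mono_single1 by simp
lemma ev_Cst[simp]: "ev \<phi> (Cst c) = Cst c" by (simp add: Cst_def ev_single)

lemma ev_hom: "comm_ring_hom (ev \<phi>)"
  by unfold_locales (simp_all add: ev_add ev_mult)

lemma ev_det: "ev \<phi> (det A) = det (map_mat (ev \<phi>) A)"
  using comm_ring_hom.hom_det[OF ev_hom] by simp

lemma ev_minus: "ev \<phi> (p - q) = ev \<phi> p - ev \<phi> q"
proof -
  have "ev \<phi> (p - q) + ev \<phi> q = ev \<phi> p" by (metis ev_add diff_add_cancel)
  thus ?thesis by (simp add: algebra_simps)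
qed

lemma vars_add: "vars (p + q) \<subseteq> vars p \<union> vars q"
  unfolding vars_def using keys_add[of p q] by auto

lemma vars_minus: "vars (- p) = vars p"
  unfolding vars_def by simp

lemma vars_diff: "vars (p - q) \<subseteq> vars p \<union> vars q"
  using vars_add[of p "-q"] vars_minus[of q] by simp

lemma vars_mult: "vars (p * q) \<subseteq> vars p \<union> vars q"
proof
  fix v assume "v \<in> vars (p * q)"
  then obtain m where m: "m \<in> ky (p*q)" "v \<in> ky m" unfolding vars_def by auto
  then obtain a b where "a \<in> ky p" "b \<in> ky q" "m = a + b" using keys_mult[of p q] by blast
  thus "v \<in> vars p \<union> vars q" using m keys_add[of a b] unfolding vars_def by auto
qed

lemma vars_Cst[simp]: "vars (Cst c) = {}" by (simp add: vars_def Cst_def)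
lemma vars_one[simp]: "vars 1 = {}" by (simp add: vars_def)
lemma vars_zero[simp]: "vars 0 = {}" by (simp add: vars_def)
lemma vars_X[simp]: "vars (X v) = {v}" by (simp add: vars_def X_def)

lemma vars_pow: "vars (p ^ k) \<subseteq> vars p"
  by (induction k) (use vars_mult in auto)

lemma vars_prod: "vars (prod f S) \<subseteq> (\<Union>x\<in>S. vars (f x))"
  by (induction S rule: infinite_finite_induct) (use vars_mult in auto)

lemma vars_sum: "vars (sum f S) \<subseteq> (\<Union>x\<in>S. vars (f x))"
  by (induction S rule: infinite_finite_induct) (use vars_add in auto)

lemma vars_mono: "vars (mono \<phi> m) \<subseteq> (\<Union>v\<in>ky m. vars (\<phi> v))"
  unfolding mono_def using vars_prod vars_pow by fastforce

lemma vars_ev: "vars (ev \<phi> p) \<subseteq> (\<Union>v\<in>vars p. vars (\<phi> v))"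
proof -
  have "vars (ev \<phi> p) \<subseteq> (\<Union>m\<in>ky p. vars (Cst (lk p m) * mono \<phi> m))"
    unfolding ev_def by (rule vars_sum)
  also have "\<dots> \<subseteq> (\<Union>m\<in>ky p. \<Union>v\<in>ky m. vars (\<phi> v))"
    using vars_mult vars_mono by fastforce
  also have "\<dots> = (\<Union>v\<in>vars p. vars (\<phi> v))" unfolding vars_def by auto
  finally show ?thesis .
qed

lemma vars_empty_Cst: assumes "vars p = {}" shows "p = Cst (lk p 0)"
proof -
  have "ky p \<subseteq> {0}" using assms unfolding vars_def by auto
  hence "p = (\<Sum>m\<in>{0}. Poly_Mapping.single m (lk p m))"
    by (subst poly_expand) (rule sum.mono_neutral_left, auto simp: in_keys_iff)
  thus ?thesis by (simp add: Cst_def)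
qed

lemma vars_empty_unit: assumes "vars p = {}" "p \<noteq> 0" shows "p dvd 1"
proof -
  have p: "p = Cst (lk p 0)" by (rule vars_empty_Cst[OF assms(1)])
  hence "lk p 0 \<noteq> 0" using assms(2) by auto
  hence "p * Cst (1 / lk p 0) = 1" by (subst p) (simp add: Cst_mult[symmetric])
  thus ?thesis by (metis dvdI)
qed

section \<open>rank one lemma\<close>

lemma keys_sub_single: assumes "ky (a::var \<Rightarrow>\<^sub>0 nat) \<subseteq> {y}" shows "a = Poly_Mapping.single y (lk a y)"
proof (rule poly_mapping_eqI)
  fix k show "lk a k = lk (Poly_Mapping.single y (lk a y)) k"
    using assms by (cases "k = y") (auto simp: lookup_single in_keys_iff)
qed

lemma neq_by_lookup: "lk a w \<noteq> lk b w \<Longrightarrow> a \<noteq> b" by auto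

lemma rank_one:
  fixes p q :: mpoly
  assumes vp: "vars p \<subseteq> {y}" and vq: "vars q \<subseteq> {z}" and yz: "y \<noteq> z"
   and eq: "p * q = Cst c1 + Cst c2 * X y + Cst c3 * X z + Cst c4 * (X y * X z)"
  shows "c1 * c4 = c2 * c3"
proof -
  define my where "my i = Poly_Mapping.single y (i::nat)" for i
  define mz where "mz i = Poly_Mapping.single z (i::nat)" for i
  have eqv: "(a + b = my i + mz j) = (a = my i \<and> b = mz j)" if a: "a \<in> ky p" and b: "b \<in> ky q" for a b i j
  proof
    assume h: "a + b = my i + mz j"
    have ka: "ky a \<subseteq> {y}" using a vp unfolding vars_def by auto
    have kb: "ky b \<subseteq> {z}" using b vq unfolding vars_def by auto
    have a1: "a = Poly_Mapping.single y (lk a y)" by (rule keys_sub_single[OF ka])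
    have b1: "b = Poly_Mapping.single z (lk b z)" by (rule keys_sub_single[OF kb])
    have by0: "lk b y = 0" using kb yz by (auto simp: in_keys_iff)
    have az0: "lk a z = 0" using ka yz by (auto simp: in_keys_iff)
    have "lk (a+b) y = lk (my i + mz j) y" "lk (a+b) z = lk (my i + mz j) z" using h by simp_all
    hence "lk a y = i" "lk b z = j" using yz by0 az0
      by (simp_all add: lookup_add lookup_single my_def mz_def)
    thus "a = my i \<and> b = mz j" using a1 b1 by (simp add: my_def mz_def)
  qed simp
  have key: "lk (p*q) (my i + mz j) = lk p (my i) * lk q (mz j)" for i j
  proof -
    have "lk (p*q) (my i + mz j) = (\<Sum>a\<in>ky p. \<Sum>b\<in>ky q. if a = my i then (if b = mz j then lk p a * lk q b else 0) else 0)"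
      unfolding lookup_mult_sum by (intro sum.cong refl) (auto simp: eqv)
    also have "\<dots> = (\<Sum>a\<in>ky p. if a = my i then lk p a * lk q (mz j) else 0)"
      by (rule sum.cong[OF refl]) (auto simp: sum.delta in_keys_iff)
    also have "\<dots> = lk p (my i) * lk q (mz j)" by (simp add: sum.delta in_keys_iff)
    finally show ?thesis .
  qed
  have rhs: "p * q = Poly_Mapping.single 0 c1 + Poly_Mapping.single (my 1) c2 + Poly_Mapping.single (mz 1) c3 + Poly_Mapping.single (my 1 + mz 1) c4"
    unfolding eq by (simp add: Cst_def X_def mult_single my_def mz_def)
  have d1: "my 1 \<noteq> 0" by (rule neq_by_lookup[where w=y]) (simp add: my_def)
  have d2: "mz 1 \<noteq> 0" by (rule neq_by_lookup[where w=z]) (simp add: mz_def)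
  have d3: "my 1 \<noteq> mz 1" by (rule neq_by_lookup[where w=y]) (simp add: my_def mz_def lookup_single yz yz[symmetric] when_def)
  have d4: "my 1 + mz 1 \<noteq> 0" by (rule neq_by_lookup[where w=y]) (simp add: my_def mz_def lookup_single lookup_add yz when_def)
  have d5: "my 1 + mz 1 \<noteq> my 1" by (rule neq_by_lookup[where w=z]) (simp add: my_def mz_def lookup_single lookup_add yz when_def)
  have d6: "my 1 + mz 1 \<noteq> mz 1" by (rule neq_by_lookup[where w=y]) (simp add: my_def mz_def lookup_single lookup_add yz when_def)
  have z0: "my 0 = 0" "mz 0 = 0" by (simp_all add: my_def mz_def)
  have e1: "c1 = lk p (my 0) * lk q (mz 0)" using key[of 0 0] unfolding rhs
    using d1 d2 d4 by (simp add: lookup_add lookup_single z0 when_def)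
  have e2: "c2 = lk p (my 1) * lk q (mz 0)" using key[of 1 0] unfolding rhs
    using d1 d3 d5 by (simp add: lookup_add lookup_single z0 when_def)
  have e3: "c3 = lk p (my 0) * lk q (mz 1)" using key[of 0 1] unfolding rhs
    using d2 d3 d6 by (simp add: lookup_add lookup_single z0 when_def)
  have e4: "c4 = lk p (my 1) * lk q (mz 1)" using key[of 1 1] unfolding rhs
    using d4 d5 d6 by (simp add: lookup_add lookup_single z0 when_def)
  show ?thesis unfolding e1 e2 e3 e4 by (simp add: mult_ac)
qed

section \<open>degree bounds\<close>

definition degle :: "var \<Rightarrow> nat \<Rightarrow> mpoly \<Rightarrow> bool" where
  "degle v d p = (\<forall>m\<in>ky p. lk m v \<le> d)"

lemma degle_add: "degle v d p \<Longrightarrow> degle v d q \<Longrightarrow> degle v d (p + q)"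
  unfolding degle_def using keys_add[of p q] by blast

lemma degle_uminus: "degle v d p \<Longrightarrow> degle v d (- p)"
  unfolding degle_def by simp

lemma degle_diff: "degle v d p \<Longrightarrow> degle v d q \<Longrightarrow> degle v d (p - q)"
  using degle_add[of v d p "-q"] degle_uminus[of v d q] by simp

lemma degle_mult: "degle v d1 p \<Longrightarrow> degle v d2 q \<Longrightarrow> degle v (d1 + d2) (p * q)"
  unfolding degle_def using keys_mult[of p q] by (fastforce simp: lookup_add intro: add_mono)

lemma degle_mono: "degle v d p \<Longrightarrow> d \<le> d' \<Longrightarrow> degle v d' p"
  unfolding degle_def by force

lemma degle_sum: "(\<And>x. x \<in> S \<Longrightarrow> degle v d (f x)) \<Longrightarrow> degle v d (sum f S)"
proof (induction S rule: infinite_finite_induct)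
  case (infinite A) thus ?case by (simp add: degle_def)
next
  case empty thus ?case by (simp add: degle_def)
next
  case (insert x F) thus ?case by (simp add: degle_add)
qed

lemma degle_prod: "(\<And>x. x \<in> S \<Longrightarrow> degle v (d x) (f x)) \<Longrightarrow> degle v (sum d S) (prod f S)"
proof (induction S rule: infinite_finite_induct)
  case (infinite A) thus ?case by (simp add: degle_def)
next
  case empty thus ?case by (simp add: degle_def)
next
  case (insert x F) thus ?case by (simp add: degle_mult)
qed

lemma degle_of_int: "degle v 0 (of_int k)"
  unfolding degle_def by (simp flip: single_of_int)

lemma degle_X: "degle v (if w = v then 1 else 0) (X w)"
  unfolding degle_def X_def by (simp add: lookup_single)

lemma degle_vars: "degle v 0 p \<Longrightarrow> v \<notin> vars p"
  unfolding degle_def vars_def by (auto simp: in_keys_iff)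

lemma set_row_pairs: "set (row_pairs n) = {(a,b). a < b \<and> b < n}"
  by (auto simp: row_pairs_def image_iff)

lemma row_pairs_aux: assumes "x < n" "y < n" "map (Pair x) [Suc x..<n] = map (Pair y) [Suc y..<n]" shows "x = y"
proof (rule ccontr)
  assume ne: "x \<noteq> y"
  have S: "set (map (Pair x) [Suc x..<n]) = set (map (Pair y) [Suc y..<n])" using assms(3) by simp
  show False
  proof (cases "x < y")
    case True
    hence "(x,y) \<in> set (map (Pair x) [Suc x..<n])" using assms(1,2) by auto
    thus False using S ne by auto
  next
    case False
    hence "(y,x) \<in> set (map (Pair y) [Suc y..<n])" using assms(1,2) ne by auto
    thus False using S ne by auto
  qed
qed

lemma sum_choose2: "(\<Sum>a<n. n - Suc a) = n choose 2"
proof (induction n)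
  case 0 thus ?case by simp
next
  case (Suc n)
  have "(\<Sum>a<Suc n. Suc n - Suc a) = (Suc n - Suc 0) + (\<Sum>a<n. Suc n - Suc (Suc a))"
    by (rule sum.lessThan_Suc_shift)
  also have "\<dots> = n + (n choose 2)" using Suc by simp
  also have "\<dots> = Suc n choose 2" by (simp add: numeral_2_eq_2)
  finally show ?case .
qed

lemma length_row_pairs: "length (row_pairs n) = n choose 2"
proof -
  have "length (row_pairs n) = sum_list (map (\<lambda>a. n - Suc a) [0..<n])"
    by (simp add: row_pairs_def length_concat o_def)
  also have "\<dots> = (\<Sum>a<n. n - Suc a)"
    by (simp add: sum_list_distinct_conv_sum_set atLeast0LessThan)
  finally show ?thesis using sum_choose2 by simp
qed

lemma distinct_row_pairs: "distinct (row_pairs n)"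
  unfolding row_pairs_def
  by (rule distinct_concat) (auto simp: distinct_map inj_on_def dest: row_pairs_aux)

lemma row_pairs_nth: assumes "i < n choose 2" shows "fst (row_pairs n ! i) < snd (row_pairs n ! i) \<and> snd (row_pairs n ! i) < n"
proof -
  have "row_pairs n ! i \<in> set (row_pairs n)" using assms length_row_pairs by simp
  thus ?thesis by (auto simp: set_row_pairs)
qed

lemma row_pairs_idx: assumes "a < b" "b < n" obtains i where "i < n choose 2" "row_pairs n ! i = (a,b)"
proof -
  have "(a,b) \<in> set (row_pairs n)" using assms by (simp add: set_row_pairs)
  thus ?thesis using that length_row_pairs by (metis in_set_conv_nth)
qed

lemma row_pairs_inj: assumes "i < n choose 2" "i' < n choose 2" "row_pairs n ! i = row_pairs n ! i'" shows "i = i'"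
  using assms distinct_row_pairs[of n] length_row_pairs[of n] nth_eq_iff_index_eq by metis

lemma det_almost_mono:
  fixes A :: "'a :: comm_ring_1 mat"
  assumes A: "A \<in> carrier_mat N N" and \<sigma>: "\<sigma> permutes {0..<N}" and Q: "Q < N"
   and z: "\<And>i j. i < N \<Longrightarrow> j < N \<Longrightarrow> i \<noteq> Q \<Longrightarrow> j \<noteq> \<sigma> i \<Longrightarrow> A $$ (i,j) = 0"
  shows "det A = signof \<sigma> * (\<Prod>i=0..<N. A $$ (i, \<sigma> i))"
proof -
  have zero: "signof p * (\<Prod>i=0..<N. A $$ (i, p i)) = 0" if p: "p permutes {0..<N}" and ne: "p \<noteq> \<sigma>" for p
  proof -
    have "\<exists>i<N. i \<noteq> Q \<and> p i \<noteq> \<sigma> i"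
    proof (rule ccontr)
      assume "\<not> ?thesis"
      hence eq: "\<And>i. i < N \<Longrightarrow> i \<noteq> Q \<Longrightarrow> p i = \<sigma> i" by auto
      have "p Q \<in> {0..<N}" using p Q by (simp add: permutes_in_image)
      then obtain i0 where i0: "i0 \<in> {0..<N}" "p Q = \<sigma> i0"
        using permutes_image[OF \<sigma>] by (metis imageE)
      have "i0 = Q"
      proof (rule ccontr)
        assume "i0 \<noteq> Q"
        hence "p i0 = p Q" using eq[of i0] i0 by simp
        hence "i0 = Q" using permutes_inj[OF p] by (metis injD)
        thus False using \<open>i0 \<noteq> Q\<close> by simp
      qed
      hence "\<forall>i. p i = \<sigma> i"
        using eq i0 permutes_not_in[OF p] permutes_not_in[OF \<sigma>] by (metis atLeastLessThan_iff zero_le)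
      thus False using ne by auto
    qed
    then obtain i where i: "i < N" "i \<noteq> Q" "p i \<noteq> \<sigma> i" by auto
    have "p i < N" using p i by (simp add: permutes_in_image)
    hence "A $$ (i, p i) = 0" using z i by auto
    hence "(\<Prod>i=0..<N. A $$ (i, p i)) = 0" using i by (intro prod_zero) auto
    thus ?thesis by simp
  qed
  have "det A = (\<Sum>p \<in> {p. p permutes {0..<N}}. signof p * (\<Prod>i=0..<N. A $$ (i, p i)))"
    by (rule det_def'[OF A])
  also have "\<dots> = (\<Sum>p \<in> {p. p permutes {0..<N}}. if p = \<sigma> then signof p * (\<Prod>i=0..<N. A $$ (i, p i)) else 0)"
    by (rule sum.cong[OF refl]) (use zero in auto)
  also have "\<dots> = signof \<sigma> * (\<Prod>i=0..<N. A $$ (i, \<sigma> i))"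
    using \<sigma> by (simp add: sum.delta finite_permutations)
  finally show ?thesis .
qed

definition Vset :: "nat \<Rightarrow> nat \<Rightarrow> var set" where "Vset n j = {(j,r,c) | r c. r < n \<and> c < 2}"

lemma pl_minor_X: "pl_minor n i j = (let (a, b) = row_pairs n ! i in X (j,a,0) * X (j,b,1) - X (j,a,1) * X (j,b,0))"
  by (simp add: pl_minor_def Var_X)

lemma degle_pl_minor: assumes "i < n choose 2" shows "degle v (if v \<in> Vset n j then 1 else 0) (pl_minor n i j)"
proof -
  obtain a b where ab: "row_pairs n ! i = (a,b)" by force
  have ab2: "a < b" "b < n" using row_pairs_nth[OF assms] ab by auto
  have "degle v ((if (j,a,0) = v then 1 else 0) + (if (j,b,1) = v then 1 else 0)) (X (j,a,0) * X (j,b,1))"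
    by (intro degle_mult degle_X)
  hence 1: "degle v (if v \<in> Vset n j then 1 else 0) (X (j,a,0) * X (j,b,1))"
    by (rule degle_mono) (use ab2 in \<open>auto simp: Vset_def\<close>)
  have "degle v ((if (j,a,1) = v then 1 else 0) + (if (j,b,0) = v then 1 else 0)) (X (j,a,1) * X (j,b,0))"
    by (intro degle_mult degle_X)
  hence 2: "degle v (if v \<in> Vset n j then 1 else 0) (X (j,a,1) * X (j,b,0))"
    by (rule degle_mono) (use ab2 in \<open>auto simp: Vset_def\<close>)
  show ?thesis unfolding pl_minor_X ab using degle_diff[OF 1 2] by simp
qed

lemma minor_submatrix_carrier: "minor_submatrix n colsel \<in> carrier_mat (n choose 2) (n choose 2)"
  by (simp add: minor_submatrix_def)

lemma minor_submatrix_dims[simp]: "dim_row (minor_submatrix n colsel) = n choose 2" "dim_col (minor_submatrix n colsel) = n choose 2"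
  by (simp_all add: minor_submatrix_def)

lemma minor_submatrix_index: "i < n choose 2 \<Longrightarrow> k < n choose 2 \<Longrightarrow> minor_submatrix n colsel $$ (i,k) = pl_minor n i (colsel k)"
  by (simp add: minor_submatrix_def)

lemma degle_F:
  assumes inj: "inj_on colsel {0..<n choose 2}"
  shows "degle v (if v \<in> (\<Union>k\<in>{0..<n choose 2}. Vset n (colsel k)) then 1 else 0) (det (minor_submatrix n colsel))"
proof -
  let ?N = "n choose 2"
  let ?d = "\<lambda>k. if v \<in> Vset n (colsel k) then 1 else (0::nat)"
  have bound: "sum ?d {0..<?N} \<le> (if v \<in> (\<Union>k\<in>{0..<?N}. Vset n (colsel k)) then 1 else 0)"
  proof -
    have "sum ?d {0..<?N} = card {k\<in>{0..<?N}. v \<in> Vset n (colsel k)}"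
      by (simp add: sum.If_cases) (rule arg_cong[where f=card], auto)
    also have "\<dots> \<le> (if v \<in> (\<Union>k\<in>{0..<?N}. Vset n (colsel k)) then 1 else 0)"
    proof (cases "v \<in> (\<Union>k\<in>{0..<?N}. Vset n (colsel k))")
      case True
      have fin: "finite {k\<in>{0..<?N}. v \<in> Vset n (colsel k)}" by simp
      have "\<forall>a\<in>{k\<in>{0..<?N}. v \<in> Vset n (colsel k)}. \<forall>b\<in>{k\<in>{0..<?N}. v \<in> Vset n (colsel k)}. a = b"
        using inj by (auto simp: Vset_def inj_on_def)
      hence "card {k\<in>{0..<?N}. v \<in> Vset n (colsel k)} \<le> Suc 0"
        using card_le_Suc0_iff_eq[OF fin] by blast
      thus ?thesis using True by simp
    next
      case False thus ?thesis by auto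
    qed
    finally show ?thesis .
  qed
  show ?thesis
    unfolding det_def'[OF minor_submatrix_carrier]
  proof (rule degle_sum)
    fix p assume "p \<in> {p. p permutes {0..<?N}}"
    hence p: "p permutes {0..<?N}" by simp
    have "degle v (sum (\<lambda>i. ?d (p i)) {0..<?N}) (\<Prod>i = 0..<?N. minor_submatrix n colsel $$ (i, p i))"
    proof (rule degle_prod)
      fix i assume i: "i \<in> {0..<?N}"
      hence "p i < ?N" using p by (simp add: permutes_in_image)
      thus "degle v (?d (p i)) (minor_submatrix n colsel $$ (i, p i))"
        using i by (simp add: minor_submatrix_index degle_pl_minor)
    qed
    moreover have "sum (\<lambda>i. ?d (p i)) {0..<?N} = sum ?d {0..<?N}"
      using sum.permute[OF p, of ?d] by (simp add: o_def)
    ultimately have "degle v (sum ?d {0..<?N}) (\<Prod>i = 0..<?N. minor_submatrix n colsel $$ (i, p i))" by simp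
    hence "degle v (0 + sum ?d {0..<?N}) (signof p * (\<Prod>i = 0..<?N. minor_submatrix n colsel $$ (i, p i)))"
      by (intro degle_mult degle_of_int)
    thus "degle v (if v \<in> (\<Union>k\<in>{0..<?N}. Vset n (colsel k)) then 1 else 0)
      (signof p * (\<Prod>i = 0..<?N. minor_submatrix n colsel $$ (i, p i)))"
      using bound by (auto intro: degle_mono)
  qed
qed

section \<open>abstract irreducibility criterion\<close>

definition edge :: "mpoly \<Rightarrow> var \<Rightarrow> var \<Rightarrow> bool" where
  "edge F y z \<longleftrightarrow> y \<noteq> z \<and> (\<exists>\<phi> c1 c2 c3 c4. (\<forall>v. vars (\<phi> v) \<subseteq> {v} \<inter> {y,z}) \<and>
     ev \<phi> F = Cst c1 + Cst c2 * X y + Cst c3 * X z + Cst c4 * (X y * X z) \<and> c1 * c4 \<noteq> c2 * c3)"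

lemma vars_ev_sub: assumes "\<forall>v. vars (\<phi> v) \<subseteq> {v} \<inter> K" shows "vars (ev \<phi> p) \<subseteq> vars p \<inter> K"
  using vars_ev[of \<phi> p] assms by blast

lemma edge_sides:
  assumes e: "edge F y z" and F: "F = g * h" and disj: "vars g \<inter> vars h = {}"
  shows "(y \<in> vars g \<longleftrightarrow> z \<in> vars g) \<and> y \<in> vars g \<union> vars h \<and> z \<in> vars g \<union> vars h"
proof -
  obtain \<phi> c1 c2 c3 c4 where yz: "y \<noteq> z" and \<phi>: "\<forall>v. vars (\<phi> v) \<subseteq> {v} \<inter> {y,z}"
    and eq: "ev \<phi> F = Cst c1 + Cst c2 * X y + Cst c3 * X z + Cst c4 * (X y * X z)"
    and c: "c1 * c4 \<noteq> c2 * c3"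
    using e unfolding edge_def by blast
  define G where "G = ev \<phi> g"
  define H where "H = ev \<phi> h"
  have GH: "G * H = Cst c1 + Cst c2 * X y + Cst c3 * X z + Cst c4 * (X y * X z)"
    using eq F by (simp add: G_def H_def ev_mult)
  have HG: "H * G = Cst c1 + Cst c2 * X y + Cst c3 * X z + Cst c4 * (X y * X z)"
    using GH by (simp add: mult.commute)
  have hG: "vars G \<subseteq> vars g \<inter> {y,z}" unfolding G_def by (rule vars_ev_sub[OF \<phi>])
  have hH: "vars H \<subseteq> vars h \<inter> {y,z}" unfolding H_def by (rule vars_ev_sub[OF \<phi>])
  have n1: "\<not> (vars G \<subseteq> {y} \<and> vars H \<subseteq> {z})" using rank_one[OF _ _ yz GH] c by blast
  have n2: "\<not> (vars H \<subseteq> {y} \<and> vars G \<subseteq> {z})" using rank_one[OF _ _ yz HG] c by blast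
  show ?thesis using hG hH n1 n2 disj yz by blast
qed

lemma irred_abstract:
  fixes F :: mpoly
  assumes deg: "\<And>v. degle v (if v \<in> V then 1 else 0) F"
  and e0: "edge F y0 z0"
  and conn: "\<And>g h. F = g * h \<Longrightarrow> vars g \<inter> vars h = {} \<Longrightarrow> \<forall>v\<in>V. (v \<in> vars g \<longleftrightarrow> w0 \<in> vars g) \<and> v \<in> vars g \<union> vars h"
  and w0: "w0 \<in> V"
  shows "irreducible F"
proof -
  have "y0 \<in> vars F" using edge_sides[OF e0, of F 1] by simp
  hence F0: "F \<noteq> 0" by auto
  have ex_key: "\<exists>a\<in>ky p. 1 \<le> lk a v" if vp: "v \<in> vars p" for v p
  proof -
    obtain a where "a \<in> ky p" "v \<in> ky a" using vp unfolding vars_def by auto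
    moreover hence "1 \<le> lk a v" by (simp add: in_keys_iff Suc_le_eq)
    ultimately show ?thesis by blast
  qed
  have Fu: "\<not> F dvd 1"
  proof
    assume "F dvd 1"
    then obtain w where w: "1 = F * w" by (auto elim: dvdE)
    hence "w \<noteq> 0" by auto
    then obtain b where b: "b \<in> ky w" by (metis keys_eq_empty ex_in_conv)
    obtain a where a: "a \<in> ky F" "1 \<le> lk a y0" using ex_key[OF \<open>y0 \<in> vars F\<close>] by blast
    obtain m where "m \<in> ky (F * w)" "lk a y0 + lk b y0 \<le> lk m y0" using mult_deg_lb[OF a(1) b] by blast
    thus False using a w by simp
  qed
  have VF: "vars F \<subseteq> V"
  proof
    fix v assume "v \<in> vars F"
    show "v \<in> V"
    proof (rule ccontr)
      assume "v \<notin> V"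
      hence "degle v 0 F" using deg[of v] by simp
      thus False using degle_vars \<open>v \<in> vars F\<close> by blast
    qed
  qed
  show ?thesis
  proof (rule irreducibleI[OF F0 Fu])
    fix a b assume ab: "F = a * b"
    hence a0: "a \<noteq> 0" and b0: "b \<noteq> 0" using F0 by auto
    have disj: "vars a \<inter> vars b = {}"
    proof (rule ccontr)
      assume "vars a \<inter> vars b \<noteq> {}"
      then obtain v where "v \<in> vars a" "v \<in> vars b" by auto
      then obtain ma mb where "ma \<in> ky a" "1 \<le> lk ma v" "mb \<in> ky b" "1 \<le> lk mb v" using ex_key by meson
      then obtain m where m: "m \<in> ky F" "2 \<le> lk m v" using mult_deg_lb[of ma a mb b v] ab by fastforce
      have "degle v 1 F" using deg[of v] by (auto intro: degle_mono)
      thus False using m unfolding degle_def by fastforce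
    qed
    have sub: "vars q \<subseteq> vars F" if Fpq: "F = p * q" and p0: "p \<noteq> 0" for p q
    proof
      fix v assume "v \<in> vars q"
      then obtain mb where mb: "mb \<in> ky q" "1 \<le> lk mb v" using ex_key by blast
      obtain ma where ma: "ma \<in> ky p" using p0 by (metis keys_eq_empty ex_in_conv)
      obtain m where "m \<in> ky F" "1 \<le> lk m v" using mult_deg_lb[OF ma mb(1), of v] mb Fpq by fastforce
      thus "v \<in> vars F" unfolding vars_def by (metis UN_I in_keys_iff not_one_le_zero)
    qed
    have Va: "vars a \<subseteq> V" using sub[of b a] ab a0 b0 VF by (auto simp: mult.commute)
    have Vb: "vars b \<subseteq> V" using sub[of a b] ab a0 VF by auto
    have C: "\<forall>v\<in>V. (v \<in> vars a \<longleftrightarrow> w0 \<in> vars a) \<and> v \<in> vars a \<union> vars b" by (rule conn[OF ab disj])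
    show "a dvd 1 \<or> b dvd 1"
    proof (cases "w0 \<in> vars a")
      case True
      hence "vars b = {}" using C Vb disj by blast
      thus ?thesis using vars_empty_unit b0 by blast
    next
      case False
      hence "vars a = {}" using C Va by blast
      thus ?thesis using vars_empty_unit a0 by blast
    qed
  qed
qed

lemma Cst_uminus: "Cst (- a) = - Cst a" by (simp add: Cst_def single_uminus)

lemma edge_of_eq:
  assumes "y \<noteq> z" "\<forall>v. vars (\<phi> v) \<subseteq> {v} \<inter> {y,z}"
    "ev \<phi> F = Cst s * (Cst d1 + Cst d2 * X y + Cst d3 * X z + Cst d4 * (X y * X z))"
    "s \<noteq> 0" "d1 * d4 \<noteq> d2 * d3"
  shows "edge F y z"
proof -
  have "ev \<phi> F = Cst (s*d1) + Cst (s*d2) * X y + Cst (s*d3) * X z + Cst (s*d4) * (X y * X z)"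
    using assms(3) by (simp add: Cst_mult algebra_simps)
  moreover have "(s*d1) * (s*d4) \<noteq> (s*d2) * (s*d3)" using assms(4,5) by (simp add: algebra_simps)
  ultimately show ?thesis unfolding edge_def using assms(1,2) by blast
qed

definition spec :: "nat \<Rightarrow> (nat \<Rightarrow> nat) \<Rightarrow> (nat \<Rightarrow> nat \<Rightarrow> nat \<Rightarrow> mpoly) \<Rightarrow> var \<Rightarrow> mpoly" where
  "spec N colsel Ls = (\<lambda>(j,r,c). if j \<in> colsel ` {0..<N} then Ls (inv_into {0..<N} colsel j) r c else 0)"

definition LM :: "(nat \<Rightarrow> nat \<Rightarrow> mpoly) \<Rightarrow> nat \<times> nat \<Rightarrow> mpoly" where
  "LM L ab = L (fst ab) 0 * L (snd ab) 1 - L (fst ab) 1 * L (snd ab) 0"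

lemma spec_matrix:
  assumes inj: "inj_on colsel {0..<n choose 2}"
  shows "map_mat (ev (spec (n choose 2) colsel Ls)) (minor_submatrix n colsel) =
    mat (n choose 2) (n choose 2) (\<lambda>(i,k). LM (Ls k) (row_pairs n ! i))"
proof (rule eq_matI)
  fix i k assume i: "i < dim_row (mat (n choose 2) (n choose 2) (\<lambda>(i,k). LM (Ls k) (row_pairs n ! i)))"
    and k: "k < dim_col (mat (n choose 2) (n choose 2) (\<lambda>(i,k). LM (Ls k) (row_pairs n ! i)))"
  hence i': "i < n choose 2" and k': "k < n choose 2" by auto
  have sp: "spec (n choose 2) colsel Ls (colsel k, r, c) = Ls k r c" for r c
    using k' inj by (simp add: spec_def inv_into_f_f)
  obtain a b where ab: "row_pairs n ! i = (a,b)" by force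
  show "map_mat (ev (spec (n choose 2) colsel Ls)) (minor_submatrix n colsel) $$ (i, k) =
    mat (n choose 2) (n choose 2) (\<lambda>(i,k). LM (Ls k) (row_pairs n ! i)) $$ (i, k)"
    using i' k' by (simp add: minor_submatrix_index pl_minor_X ab ev_minus ev_mult sp LM_def)
qed (auto simp: minor_submatrix_def)

lemma spec_vars:
  assumes "\<And>k r c. k < N \<Longrightarrow> vars (Ls k r c) \<subseteq> {(colsel k, r, c)} \<inter> K" "inj_on colsel {0..<N}"
  shows "\<forall>v. vars (spec N colsel Ls v) \<subseteq> {v} \<inter> K"
proof
  fix v :: var
  obtain j r c where v: "v = (j,r,c)" by (cases v) auto
  show "vars (spec N colsel Ls v) \<subseteq> {v} \<inter> K"
  proof (cases "j \<in> colsel ` {0..<N}")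
    case True
    then obtain k where k: "k < N" "j = colsel k" by auto
    hence "inv_into {0..<N} colsel j = k" using assms(2) by (simp add: inv_into_f_f)
    thus ?thesis using True assms(1)[OF k(1), of r c] k by (simp add: spec_def v)
  qed (simp add: spec_def v)
qed

definition UL :: "nat \<times> nat \<Rightarrow> nat \<Rightarrow> nat \<Rightarrow> mpoly" where
  "UL R r c = (if r = fst R then (if c = 0 then 1 else 0) else if r = snd R then (if c = 1 then 1 else 0) else 0)"

lemma LM_UL: "fst R < snd R \<Longrightarrow> fst ab < snd ab \<Longrightarrow> LM (UL R) ab = (if ab = R then 1 else 0)"
  by (cases R; cases ab) (auto simp: LM_def UL_def)

lemma vars_UL: "vars (UL R r c) = {}" by (simp add: UL_def)

lemma LM_unit_col:
  assumes "i < n choose 2" "m < n choose 2"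
  shows "LM (UL (row_pairs n ! m)) (row_pairs n ! i) = (if i = m then 1 else 0)"
  using assms row_pairs_nth[OF assms(1)] row_pairs_nth[OF assms(2)] row_pairs_inj[OF assms]
  by (auto simp: LM_UL)

lemma prod_single_nonone:
  fixes N q :: nat
  assumes "q < N" "\<And>i. i < N \<Longrightarrow> i \<noteq> q \<Longrightarrow> f i = 1"
  shows "(\<Prod>i=0..<N. f i) = f q"
proof -
  have "(\<Prod>i=0..<N. f i) = (\<Prod>i=0..<N. if i = q then f q else 1)"
    by (rule prod.cong) (use assms in auto)
  also have "\<dots> = f q" using assms(1) by (subst prod.delta) auto
  finally show ?thesis .
qed

lemma signof_transpose: "(signof (Transposition.transpose k q) :: mpoly) = Cst (if k = q then 1 else -1)"
  by (simp add: sign_swap_id Cst_uminus)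

section \<open>within-block edges\<close>

lemma edge_within:
  assumes inj: "inj_on colsel {0..<n choose 2}" and k: "k < n choose 2" and ab: "a < b" "b < n"
    and cc: "c < 2" "c' < 2"
  shows "edge (det (minor_submatrix n colsel)) (colsel k, a, c) (colsel k, b, c')"
proof -
  let ?N = "n choose 2"
  define y where "y = (colsel k, a, c)"
  define z where "z = (colsel k, b, c')"
  obtain q where q: "q < ?N" "row_pairs n ! q = (a,b)" using row_pairs_idx[OF ab] by blast
  define \<beta> where "\<beta> = Transposition.transpose k q"
  define Lw where "Lw r d = (if r = a then (if d = c then X y else 1) else if r = b then (if d = c' then X z else 1) else 0)" for r d
  define Ls where "Ls m = (if m = k then Lw else UL (row_pairs n ! (\<beta> m)))" for m
  define \<phi> where "\<phi> = spec ?N colsel Ls"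
  have yz: "y \<noteq> z" using ab by (simp add: y_def z_def)
  have v\<phi>: "\<forall>v. vars (\<phi> v) \<subseteq> {v} \<inter> {y,z}"
    unfolding \<phi>_def
  proof (rule spec_vars[OF _ inj])
    fix m r d assume "m < ?N"
    show "vars (Ls m r d) \<subseteq> {(colsel m, r, d)} \<inter> {y,z}"
      by (auto simp: Ls_def Lw_def vars_UL y_def z_def)
  qed
  have \<beta>p: "\<beta> permutes {0..<?N}" unfolding \<beta>_def using k q by (intro permutes_swap_id) auto
  have \<beta>N: "\<beta> i < ?N" if "i < ?N" for i using permutes_in_image[OF \<beta>p] that by simp
  have \<beta>\<beta>: "\<beta> (\<beta> i) = i" for i by (simp add: \<beta>_def)
  have \<beta>q: "\<beta> q = k" by (simp add: \<beta>_def)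
  define P where "P = Lw a 0 * Lw b 1 - Lw a 1 * Lw b 0"
  define M where "M = mat ?N ?N (\<lambda>(i,m). LM (Ls m) (row_pairs n ! i))"
  have Mk: "M $$ (i,k) = (if i = q then P else 0)" if i: "i < ?N" for i
  proof (cases "i = q")
    case True thus ?thesis using i k q by (simp add: M_def Ls_def LM_def P_def)
  next
    case False
    obtain a' b' where ab': "row_pairs n ! i = (a',b')" by force
    have a'b': "a' < b'" using row_pairs_nth[OF i] ab' by auto
    have "(a',b') \<noteq> (a,b)" using row_pairs_inj[OF i q(1)] q(2) ab' False by auto
    hence "LM Lw (a',b') = 0" using a'b' ab by (auto simp: LM_def Lw_def)
    thus ?thesis using False i k ab' by (simp add: M_def Ls_def)
  qed
  have Mo: "M $$ (i,m) = (if i = \<beta> m then 1 else 0)" if "i < ?N" "m < ?N" "m \<noteq> k" for i m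
    using that LM_unit_col[OF that(1) \<beta>N[OF that(2)]] by (simp add: M_def Ls_def)
  have "ev \<phi> (det (minor_submatrix n colsel)) = det M"
    unfolding ev_det \<phi>_def M_def spec_matrix[OF inj] ..
  also have "det M = signof \<beta> * (\<Prod>i=0..<?N. M $$ (i, \<beta> i))"
  proof (rule det_almost_mono[OF _ \<beta>p q(1)])
    show "M \<in> carrier_mat ?N ?N" by (simp add: M_def)
    fix i j assume ij: "i < ?N" "j < ?N" "i \<noteq> q" "j \<noteq> \<beta> i"
    show "M $$ (i,j) = 0"
    proof (cases "j = k")
      case True thus ?thesis using Mk[OF ij(1)] ij by simp
    next
      case False thus ?thesis using Mo[OF ij(1,2) False] ij \<beta>\<beta>[of j] by auto
    qed
  qed
  also have "(\<Prod>i=0..<?N. M $$ (i, \<beta> i)) = M $$ (q, \<beta> q)"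
  proof (rule prod_single_nonone[OF q(1)])
    fix i assume i: "i < ?N" "i \<noteq> q"
    have \<beta>k: "\<beta> k = q" by (simp add: \<beta>_def)
    have "\<beta> i \<noteq> k" using i(2) \<beta>\<beta>[of i] \<beta>k by metis
    thus "M $$ (i, \<beta> i) = 1" using Mo[OF i(1) \<beta>N[OF i(1)]] \<beta>\<beta> by simp
  qed
  also have "M $$ (q, \<beta> q) = P" using Mk[OF q(1)] \<beta>q by simp
  finally have ev: "ev \<phi> (det (minor_submatrix n colsel)) = Cst (if k = q then 1 else -1) * P"
    unfolding \<beta>_def signof_transpose .
  have s0: "(if k = q then 1 else -1::real) \<noteq> 0" by simp
  have ne: "a \<noteq> b" using ab by simp
  have "c = 0 \<or> c = 1" "c' = 0 \<or> c' = 1" using cc by auto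
  then consider "c = 0" "c' = 0" | "c = 0" "c' = 1" | "c = 1" "c' = 0" | "c = 1" "c' = 1" by blast
  thus ?thesis
  proof cases
    case 1
    have "P = Cst 0 + Cst 1 * X y + Cst (-1) * X z + Cst 0 * (X y * X z)"
      using 1 ne by (simp add: P_def Lw_def Cst_uminus)
    note Peq = this
    show ?thesis unfolding y_def[symmetric] z_def[symmetric]
      by (rule edge_of_eq[OF yz v\<phi> ev[unfolded Peq] s0]) simp
  next
    case 2
    have "P = Cst (-1) + Cst 0 * X y + Cst 0 * X z + Cst 1 * (X y * X z)"
      using 2 ne by (simp add: P_def Lw_def Cst_uminus)
    note Peq = this
    show ?thesis unfolding y_def[symmetric] z_def[symmetric]
      by (rule edge_of_eq[OF yz v\<phi> ev[unfolded Peq] s0]) simp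
  next
    case 3
    have "P = Cst 1 + Cst 0 * X y + Cst 0 * X z + Cst (-1) * (X y * X z)"
      using 3 ne by (simp add: P_def Lw_def Cst_uminus)
    note Peq = this
    show ?thesis unfolding y_def[symmetric] z_def[symmetric]
      by (rule edge_of_eq[OF yz v\<phi> ev[unfolded Peq] s0]) simp
  next
    case 4
    have "P = Cst 0 + Cst (-1) * X y + Cst 1 * X z + Cst 0 * (X y * X z)"
      using 4 ne by (simp add: P_def Lw_def Cst_uminus)
    note Peq = this
    show ?thesis unfolding y_def[symmetric] z_def[symmetric]
      by (rule edge_of_eq[OF yz v\<phi> ev[unfolded Peq] s0]) simp
  qed
qed

section \<open>cross-block edges\<close>

lemma edge_cross:
  assumes inj: "inj_on colsel {0..<n choose 2}" and n3: "3 \<le> n"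
    and k: "k < n choose 2" and k': "k' < n choose 2" and kk: "k \<noteq> k'"
  shows "\<exists>y z. y \<in> Vset n (colsel k) \<and> z \<in> Vset n (colsel k') \<and> edge (det (minor_submatrix n colsel)) y z"
proof -
  let ?N = "n choose 2"
  obtain a b where ab: "row_pairs n ! k = (a,b)" by force
  have ab2: "a < b" "b < n" using row_pairs_nth[OF k] ab by auto
  have "\<exists>c::nat. c < 3 \<and> c \<noteq> a \<and> c \<noteq> b"
  proof (cases "a \<noteq> 0 \<and> b \<noteq> 0")
    case True thus ?thesis by (intro exI[of _ 0]) auto
  next
    case False
    show ?thesis
    proof (cases "a \<noteq> 1 \<and> b \<noteq> 1")
      case True thus ?thesis by (intro exI[of _ 1]) auto
    next
      case False2: False thus ?thesis using False by (intro exI[of _ 2]) auto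
    qed
  qed
  then obtain c where c: "c < n" "c \<noteq> a" "c \<noteq> b" using n3 by (metis less_le_trans)
  have ac: "min a c < max a c" "max a c < n" using c ab2 by (auto simp: min_def max_def)
  obtain q where q: "q < ?N" "row_pairs n ! q = (min a c, max a c)" using row_pairs_idx[OF ac] by blast
  have qk: "q \<noteq> k"
  proof
    assume "q = k"
    hence "(a,b) = (min a c, max a c)" using q ab by simp
    thus False using c ab2 by (auto simp: min_def max_def split: if_splits)
  qed
  define \<beta> where "\<beta> = Transposition.transpose k' q"
  have \<beta>k: "\<beta> k = k" using qk kk by (simp add: \<beta>_def)
  have \<beta>k': "\<beta> k' = q" by (simp add: \<beta>_def)
  have \<beta>q: "\<beta> q = k'" by (simp add: \<beta>_def)
  have \<beta>\<beta>: "\<beta> (\<beta> i) = i" for i by (simp add: \<beta>_def)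
  have \<beta>p: "\<beta> permutes {0..<?N}" unfolding \<beta>_def using k' q by (intro permutes_swap_id) auto
  have \<beta>N: "\<beta> i < ?N" if "i < ?N" for i using permutes_in_image[OF \<beta>p] that by simp
  define y where "y = (colsel k, c, 1::nat)"
  define z where "z = (colsel k', b, 1::nat)"
  have yz: "y \<noteq> z" using inj k k' kk by (auto simp: y_def z_def inj_on_def)
  define Lk where "Lk r d = (if r = a then (if d = 0 then 1 else 0) else if r = b then (if d = 1 then 1 else 0)
     else if r = c then (if d = 1 then X y else 0) else 0)" for r d :: nat
  define Lk' where "Lk' r d = (if r = a then (if d = 0 then 1 else 0) else if r = c then (if d = 1 then 1 else 0)
     else if r = b then (if d = 1 then X z else 0) else 0)" for r d :: nat
  define s where "s = (if a < c then 1 else -1 :: real)"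
  define Ls where "Ls m = (if m = k then Lk else if m = k' then Lk' else UL (row_pairs n ! (\<beta> m)))" for m
  define \<phi> where "\<phi> = spec ?N colsel Ls"
  have v\<phi>: "\<forall>v. vars (\<phi> v) \<subseteq> {v} \<inter> {y,z}"
    unfolding \<phi>_def
  proof (rule spec_vars[OF _ inj])
    fix m r d assume "m < ?N"
    show "vars (Ls m r d) \<subseteq> {(colsel m, r, d)} \<inter> {y,z}"
      using kk by (auto simp: Ls_def Lk_def Lk'_def vars_UL y_def z_def)
  qed
  define M where "M = mat ?N ?N (\<lambda>(i,m). LM (Ls m) (row_pairs n ! i))"
  have Mk: "M $$ (i,k) = (if i = k then 1 else if i = q then Cst s * X y else 0)" if i: "i < ?N" for i
  proof -
    obtain x w where xw: "row_pairs n ! i = (x,w)" by force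
    have xw2: "x < w" using row_pairs_nth[OF i] xw by auto
    have "LM Lk (x,w) = (if i = k then 1 else if i = q then Cst s * X y else 0)"
    proof (cases "i = k")
      case True thus ?thesis using xw ab ab2 c by (simp add: LM_def Lk_def)
    next
      case False
      hence ne1: "(x,w) \<noteq> (a,b)" using row_pairs_inj[OF i k] xw ab by auto
      show ?thesis
      proof (cases "i = q")
        case True
        hence xw3: "x = min a c" "w = max a c" using xw q by auto
        show ?thesis using True False xw3 ab2 c
          by (cases "a < c") (auto simp: LM_def Lk_def s_def min_def max_def Cst_uminus)
      next
        case False2: False
        hence ne2: "(x,w) \<noteq> (min a c, max a c)" using row_pairs_inj[OF i q(1)] xw q by auto
        have "LM Lk (x,w) = 0" using ne1 ne2 xw2 ab2 c
          by (auto simp: LM_def Lk_def min_def max_def split: if_splits)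
        thus ?thesis using False False2 by simp
      qed
    qed
    thus ?thesis using i k xw by (simp add: M_def Ls_def)
  qed
  have Mk': "M $$ (i,k') = (if i = k then X z else if i = q then Cst s else 0)" if i: "i < ?N" for i
  proof -
    obtain x w where xw: "row_pairs n ! i = (x,w)" by force
    have xw2: "x < w" using row_pairs_nth[OF i] xw by auto
    have "LM Lk' (x,w) = (if i = k then X z else if i = q then Cst s else 0)"
    proof (cases "i = k")
      case True thus ?thesis using xw ab ab2 c by (simp add: LM_def Lk'_def)
    next
      case False
      hence ne1: "(x,w) \<noteq> (a,b)" using row_pairs_inj[OF i k] xw ab by auto
      show ?thesis
      proof (cases "i = q")
        case True
        hence xw3: "x = min a c" "w = max a c" using xw q by auto
        show ?thesis using True False xw3 ab2 c
          by (cases "a < c") (auto simp: LM_def Lk'_def s_def min_def max_def Cst_uminus)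
      next
        case False2: False
        hence ne2: "(x,w) \<noteq> (min a c, max a c)" using row_pairs_inj[OF i q(1)] xw q by auto
        have "LM Lk' (x,w) = 0" using ne1 ne2 xw2 ab2 c
          by (auto simp: LM_def Lk'_def min_def max_def split: if_splits)
        thus ?thesis using False False2 by simp
      qed
    qed
    thus ?thesis using i k' kk xw by (simp add: M_def Ls_def)
  qed
  have Mo: "M $$ (i,m) = (if i = \<beta> m then 1 else 0)" if "i < ?N" "m < ?N" "m \<noteq> k" "m \<noteq> k'" for i m
    using that LM_unit_col[OF that(1) \<beta>N[OF that(2)]] by (simp add: M_def Ls_def)
  have Mc: "M \<in> carrier_mat ?N ?N" by (simp add: M_def)
  define B where "B = addcol (- X z) k' k M"
  have Bk': "B $$ (i,k') = (if i = q then Cst s * (1 - X y * X z) else 0)" if i: "i < ?N" for i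
    using i k k' Mk[OF i] Mk'[OF i] qk Mc by (auto simp: B_def algebra_simps)
  have Bo: "B $$ (i,j) = M $$ (i,j)" if "i < ?N" "j < ?N" "j \<noteq> k'" for i j
    using that Mc by (simp add: B_def)
  have "ev \<phi> (det (minor_submatrix n colsel)) = det M"
    unfolding ev_det \<phi>_def M_def spec_matrix[OF inj] ..
  also have "det M = det B" unfolding B_def using k kk Mc by simp
  also have "det B = signof \<beta> * (\<Prod>i=0..<?N. B $$ (i, \<beta> i))"
  proof (rule det_almost_mono[OF _ \<beta>p q(1)])
    have Md: "dim_row M = ?N" "dim_col M = ?N" by (simp_all add: M_def)
    show "B \<in> carrier_mat ?N ?N" by (rule carrier_matI) (simp_all add: B_def Md)
    fix i j assume ij: "i < ?N" "j < ?N" "i \<noteq> q" "j \<noteq> \<beta> i"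
    show "B $$ (i,j) = 0"
    proof (cases "j = k'")
      case True thus ?thesis using Bk'[OF ij(1)] ij by simp
    next
      case False
      hence B: "B $$ (i,j) = M $$ (i,j)" using Bo ij by simp
      show ?thesis
      proof (cases "j = k")
        case True thus ?thesis using B Mk[OF ij(1)] ij \<beta>k by auto
      next
        case False2: False
        thus ?thesis using B Mo[OF ij(1,2) False2 False] ij \<beta>\<beta>[of j] by auto
      qed
    qed
  qed
  also have "(\<Prod>i=0..<?N. B $$ (i, \<beta> i)) = B $$ (q, \<beta> q)"
  proof (rule prod_single_nonone[OF q(1)])
    fix i assume i: "i < ?N" "i \<noteq> q"
    show "B $$ (i, \<beta> i) = 1"
    proof (cases "i = k")
      case True thus ?thesis using Bo[OF k k kk] Mk[OF k] \<beta>k by simp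
    next
      case False
      have "\<beta> i \<noteq> k" using False \<beta>\<beta>[of i] \<beta>k by metis
      moreover have "\<beta> i \<noteq> k'" using i(2) \<beta>\<beta>[of i] \<beta>k' by metis
      ultimately show ?thesis using Bo[OF i(1) \<beta>N[OF i(1)]] Mo[OF i(1) \<beta>N[OF i(1)]] \<beta>\<beta> by simp
    qed
  qed
  also have "B $$ (q, \<beta> q) = Cst s * (1 - X y * X z)" using Bk'[OF q(1)] \<beta>q by simp
  finally have ev: "ev \<phi> (det (minor_submatrix n colsel)) = Cst (if k' = q then 1 else -1) * (Cst s * (1 - X y * X z))"
    unfolding \<beta>_def signof_transpose .
  have ev2: "ev \<phi> (det (minor_submatrix n colsel)) = Cst ((if k' = q then 1 else -1) * s) *
      (Cst 1 + Cst 0 * X y + Cst 0 * X z + Cst (-1) * (X y * X z))"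
    unfolding ev by (simp add: Cst_mult Cst_uminus algebra_simps)
  have "edge (det (minor_submatrix n colsel)) y z"
    by (rule edge_of_eq[OF yz v\<phi> ev2]) (auto simp: s_def)
  moreover have "y \<in> Vset n (colsel k)" "z \<in> Vset n (colsel k')" using c ab2 by (auto simp: Vset_def y_def z_def)
  ultimately show ?thesis by blast
qed

theorem lemma3p2:
  fixes n q :: nat and colsel :: "nat \<Rightarrow> nat"
  assumes "n \<ge> 2"
    and "q \<ge> n choose 2"
    and "strict_mono_on {..<n choose 2} colsel"
    and "\<forall>k < n choose 2. colsel k < q"
  shows "irreducible (det (minor_submatrix n colsel))"
proof -
  let ?N = "n choose 2"
  let ?F = "det (minor_submatrix n colsel)"
  have inj: "inj_on colsel {0..<?N}"
    using strict_mono_on_imp_inj_on[OF assms(3)] by (simp add: atLeast0LessThan)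
  have N0: "0 < ?N" using assms(1) by simp
  have n1: "1 < n" using assms(1) by simp
  define V where "V = (\<Union>k\<in>{0..<?N}. Vset n (colsel k))"
  define w0 where "w0 = (colsel 0, 0::nat, 0::nat)"
  have w0V: "w0 \<in> V" using N0 n1 by (auto simp: V_def w0_def Vset_def)
  have e0: "edge ?F (colsel 0, 0, 0) (colsel 0, 1, 0)"
    by (rule edge_within[OF inj N0]) (use n1 in auto)
  show ?thesis
  proof (rule irred_abstract[OF _ e0 _ w0V])
    fix v show "degle v (if v \<in> V then 1 else 0) ?F" unfolding V_def by (rule degle_F[OF inj])
  next
    fix g h assume Fgh: "?F = g * h" and disj: "vars g \<inter> vars h = {}"
    define R where "R y z \<longleftrightarrow> (y \<in> vars g \<longleftrightarrow> z \<in> vars g) \<and> y \<in> vars g \<union> vars h \<and> z \<in> vars g \<union> vars h" for y z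
    have E: "R y z" if "edge ?F y z" for y z
      using edge_sides[OF that Fgh disj] unfolding R_def by blast
    have Rt: "R x z" if "R x y" "R y z" for x y z using that unfolding R_def by blast
    have Rs: "R y x" if "R x y" for x y using that unfolding R_def by blast
    have blk: "R v (colsel k, 0, 0)" if k: "k < ?N" and v: "v \<in> Vset n (colsel k)" for k v
    proof -
      obtain r c where rc: "v = (colsel k, r, c)" "r < n" "c < 2" using v by (auto simp: Vset_def)
      have base: "R (colsel k, 0, 0) (colsel k, 1, 0)"
        by (rule E, rule edge_within[OF inj k]) (use n1 in auto)
      show ?thesis
      proof (cases "r = 0")
        case False
        have "R (colsel k, 0, 0) (colsel k, r, c)"
          by (rule E, rule edge_within[OF inj k]) (use False rc in auto)
        thus ?thesis using rc Rs by simp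
      next
        case True
        show ?thesis
        proof (cases "c = 0")
          case True
          thus ?thesis using \<open>r = 0\<close> rc base Rt Rs by blast
        next
          case False
          hence c1: "c = 1" using rc by simp
          have "R (colsel k, 0, 1) (colsel k, 1, 0)"
            by (rule E, rule edge_within[OF inj k]) (use n1 in auto)
          thus ?thesis using \<open>r = 0\<close> c1 rc base Rt Rs by blast
        qed
      qed
    qed
    have "R v w0" if vV: "v \<in> V" for v
    proof -
      obtain k where k: "k < ?N" "v \<in> Vset n (colsel k)" using vV by (auto simp: V_def)
      have 1: "R v (colsel k, 0, 0)" by (rule blk[OF k])
      show ?thesis
      proof (cases "k = 0")
        case True thus ?thesis using 1 by (simp add: w0_def)
      next
        case False
        have n3: "3 \<le> n"
        proof (rule ccontr)
          assume "\<not> 3 \<le> n"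
          hence "n = 2" using assms(1) by simp
          thus False using k False by simp
        qed
        obtain y z where yz: "y \<in> Vset n (colsel k)" "z \<in> Vset n (colsel 0)" "edge ?F y z"
          using edge_cross[OF inj n3 k(1) N0 False] by blast
        have "R y z" by (rule E[OF yz(3)])
        moreover have "R y (colsel k, 0, 0)" by (rule blk[OF k(1) yz(1)])
        moreover have "R z w0" unfolding w0_def by (rule blk[OF N0 yz(2)])
        ultimately show ?thesis using 1 Rt Rs by blast
      qed
    qed
    thus "\<forall>v\<in>V. (v \<in> vars g \<longleftrightarrow> w0 \<in> vars g) \<and> v \<in> vars g \<union> vars h"
      unfolding R_def by blast
  qed
qed

end
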